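(* Let $G=(V,E)$ be a connected graph with positive edge costs $c:E\to\mathbb{R}_+$, let $\alpha\ge 1$, and let $(U,\complement{U})$ be an $\alpha$-approximate minimum cut of $G$. Then there exists a subset $S\subseteq U$ with $|S|\le\lfloor 2\alpha\rfloor+1$ such that $(U,\complement{U})$ is the unique minimum $(S,\complement{U})$-terminal cut.
   Context: A cut is a partition of $V$ into two non-empty parts; for $\emptyset\ne U\subsetneq V$ write $\complement{U}=V\setminus U$, $(U,\complement{U})$ for the corresponding cut, and $d(U)$ for the total cost of edges with exactly one endpoint in $U$. Let $\lambda=\min\{d(U):\emptyset\ne U\subsetneq V\}$. The cut $(U,\complement{U})$ is an $\alpha$-approximate minimum cut if $d(U)\le\alpha\lambda$. For disjoint non-empty $S,T\subseteq V$, a cut $(X,\complement{X})$ is an $(S,T)$-terminal cut if $S\subseteq X\subseteq V\setminus T$; a minimum $(S,T)$-terminal cut is one minimizing $d(X)$ among these. *)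

theory Defs
  imports Complex_Main
begin

definition graph :: "'a set \<Rightarrow> 'a set set \<Rightarrow> bool" where
  "graph V E \<longleftrightarrow> finite V \<and> (\<forall>e\<in>E. e \<subseteq> V \<and> card e = 2)"

definition adj_rel :: "'a set set \<Rightarrow> ('a \<times> 'a) set" where
  "adj_rel E = {(x, y). {x, y} \<in> E}"

definition connected_graph :: "'a set \<Rightarrow> 'a set set \<Rightarrow> bool" where
  "connected_graph V E \<longleftrightarrow> graph V E \<and> V \<noteq> {} \<and>
     (\<forall>u\<in>V. \<forall>v\<in>V. (u, v) \<in> (adj_rel E)\<^sup>*)"

definition cut_cost :: "'a set set \<Rightarrow> ('a set \<Rightarrow> real) \<Rightarrow> 'a set \<Rightarrow> real" where
  "cut_cost E c U = (\<Sum>e\<in>{e\<in>E. card (e \<inter> U) = 1}. c e)"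

definition is_cut :: "'a set \<Rightarrow> 'a set \<Rightarrow> bool" where
  "is_cut V U \<longleftrightarrow> U \<noteq> {} \<and> U \<subset> V"

definition min_cut_value :: "'a set \<Rightarrow> 'a set set \<Rightarrow> ('a set \<Rightarrow> real) \<Rightarrow> real" where
  "min_cut_value V E c = Min (cut_cost E c ` {U. is_cut V U})"

definition approx_min_cut ::
  "'a set \<Rightarrow> 'a set set \<Rightarrow> ('a set \<Rightarrow> real) \<Rightarrow> real \<Rightarrow> 'a set \<Rightarrow> bool" where
  "approx_min_cut V E c \<alpha> U \<longleftrightarrow> is_cut V U \<and> cut_cost E c U \<le> \<alpha> * min_cut_value V E c"

definition terminal_cut :: "'a set \<Rightarrow> 'a set \<Rightarrow> 'a set \<Rightarrow> 'a set \<Rightarrow> bool" where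
  "terminal_cut V S T X \<longleftrightarrow> S \<noteq> {} \<and> T \<noteq> {} \<and> S \<subseteq> V \<and> T \<subseteq> V \<and> S \<inter> T = {} \<and>
     is_cut V X \<and> S \<subseteq> X \<and> X \<subseteq> V - T"

definition unique_min_terminal_cut ::
  "'a set \<Rightarrow> 'a set set \<Rightarrow> ('a set \<Rightarrow> real) \<Rightarrow> 'a set \<Rightarrow> 'a set \<Rightarrow> 'a set \<Rightarrow> bool" where
  "unique_min_terminal_cut V E c S T X \<longleftrightarrow> terminal_cut V S T X \<and>
     (\<forall>Y. terminal_cut V S T Y \<and> Y \<noteq> X \<longrightarrow> cut_cost E c X < cut_cost E c Y)"

end

theory Submission imports Defs begin

lemma card_inter_two:
  assumes "x \<noteq> y" shows "card ({x,y} \<inter> Y) = 1 \<longleftrightarrow> (x \<in> Y) \<noteq> (y \<in> Y)"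
  using assms by (cases "x \<in> Y"; cases "y \<in> Y") auto

lemma cut_cost_sum:
  assumes "finite E" "finite I"
  shows "(\<Sum>i\<in>I. cut_cost E c (F i)) = (\<Sum>e\<in>E. c e * real (card {i\<in>I. card (e \<inter> F i) = 1}))"
proof -
  have "(\<Sum>i\<in>I. cut_cost E c (F i)) = (\<Sum>i\<in>I. \<Sum>e\<in>E. if card (e \<inter> F i) = 1 then c e else 0)"
    unfolding cut_cost_def using assms by (simp add: sum.inter_filter)
  also have "\<dots> = (\<Sum>e\<in>E. \<Sum>i\<in>I. if card (e \<inter> F i) = 1 then c e else 0)" by (rule sum.swap)
  also have "\<dots> = (\<Sum>e\<in>E. c e * real (card {i\<in>I. card (e \<inter> F i) = 1}))"
  proof (rule sum.cong[OF refl])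
    fix e
    have "(\<Sum>i\<in>I. if card (e \<inter> F i) = 1 then c e else 0) = (\<Sum>i\<in>{i\<in>I. card (e \<inter> F i) = 1}. c e)"
      using assms sum.inter_filter[of I "\<lambda>_. c e" "\<lambda>i. card (e \<inter> F i) = 1"] by simp
    also have "\<dots> = c e * real (card {i\<in>I. card (e \<inter> F i) = 1})" by simp
    finally show "(\<Sum>i\<in>I. if card (e \<inter> F i) = 1 then c e else 0) = c e * real (card {i\<in>I. card (e \<inter> F i) = 1})" .
  qed
  finally show ?thesis .
qed

lemma card_singleton_set:
  "card {u. A = {u}} \<le> (if card A = 1 then 1 else 0)"
proof (cases "card A = 1")
  case True
  then obtain w where "A = {w}" by (metis card_1_singletonE)
  then have "{u. A = {u}} = {w}" by auto
  then show ?thesis using True by simp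
next
  case False
  then have "{u. A = {u}} = {}" by auto
  then show ?thesis by simp
qed

lemma comb:
  assumes "finite S" "A \<subseteq> S" "B \<subseteq> S" "card A \<le> card B"
  shows "card {u\<in>S. (A={u}) \<noteq> (B={u})} + card {j\<in>{3..card S}. (card A < j) \<noteq> (card B < j)}
         \<le> card {u\<in>S. (u\<in>A) \<noteq> (u\<in>B)}"
proof -
  have fA: "finite A" and fB: "finite B" using assms finite_subset by auto
  have L: "{u\<in>S. (u\<in>A) \<noteq> (u\<in>B)} = (A - B) \<union> (B - A)" using assms by auto
  have cL: "card {u\<in>S. (u\<in>A) \<noteq> (u\<in>B)} = card (A - B) + card (B - A)"
    unfolding L using fA fB by (subst card_Un_disjoint) auto
  have "card B \<le> card ((B - A) \<union> A)" using fA fB by (intro card_mono) auto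
  also have "\<dots> \<le> card (B - A) + card A" by (rule card_Un_le)
  finally have c1: "card B \<le> card (B - A) + card A" .
  have c2: "A \<noteq> B \<Longrightarrow> card (B - A) \<ge> 1"
  proof (rule ccontr)
    assume "A \<noteq> B" "\<not> card (B - A) \<ge> 1"
    then have "card (B - A) = 0" by simp
    then have "B - A = {}" using fB by simp
    then have "B \<subseteq> A" by auto
    then have "B = A" using card_subset_eq[OF fA] assms(4) card_mono[OF fA] by (meson le_antisym)
    then show False using \<open>A \<noteq> B\<close> by simp
  qed
  have c3: "A \<noteq> B \<Longrightarrow> card A = card B \<Longrightarrow> card (A - B) \<ge> 1"
  proof (rule ccontr)
    assume "A \<noteq> B" "card A = card B" "\<not> card (A - B) \<ge> 1"
    then have "card (A - B) = 0" by simp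
    then have "A - B = {}" using fA by simp
    then have "A \<subseteq> B" by auto
    then have "A = B" using card_subset_eq[OF fB] \<open>card A = card B\<close> by metis
    then show False using \<open>A \<noteq> B\<close> by simp
  qed
  have "{j\<in>{3..card S}. (card A < j) \<noteq> (card B < j)} \<subseteq> {max 3 (card A + 1)..card B}"
    using assms(4) by auto
  then have "card {j\<in>{3..card S}. (card A < j) \<noteq> (card B < j)} \<le> card {max 3 (card A + 1)..card B}"
    by (intro card_mono) auto
  then have N: "card {j\<in>{3..card S}. (card A < j) \<noteq> (card B < j)} \<le> card B - max 2 (card A)"
    by simp
  have P: "card {u\<in>S. (A={u}) \<noteq> (B={u})} \<le> (if A = B then 0 else
            (if card A = 1 then 1 else 0) + (if card B = 1 then 1 else 0))"
  proof (cases "A = B")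
    case True then show ?thesis by simp
  next
    case False
    have "{u\<in>S. (A={u}) \<noteq> (B={u})} \<subseteq> {u. A = {u}} \<union> {u. B = {u}}" by auto
    then have "card {u\<in>S. (A={u}) \<noteq> (B={u})} \<le> card ({u. A = {u}} \<union> {u. B = {u}})"
      by (intro card_mono) (auto intro: finite_subset[of _ A] finite_subset[of _ B] simp: fA fB)
    also have "\<dots> \<le> card {u. A = {u}} + card {u. B = {u}}" by (rule card_Un_le)
    finally show ?thesis using False card_singleton_set[of A] card_singleton_set[of B] by simp
  qed
  show ?thesis
  proof (cases "A = B")
    case True then show ?thesis by simp
  next
    case False
    define p where "p = card {u\<in>S. (A={u}) \<noteq> (B={u})}"
    define n where "n = card {j\<in>{3..card S}. (card A < j) \<noteq> (card B < j)}"
    define l where "l = card {u\<in>S. (u\<in>A) \<noteq> (u\<in>B)}"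
    define a where "a = card A"
    define b where "b = card B"
    define q where "q = card (B - A)"
    define r where "r = card (A - B)"
    have h1: "p \<le> (if a = 1 then 1 else 0) + (if b = 1 then 1 else 0)" using P False unfolding p_def a_def b_def by simp
    have h2: "n \<le> b - max 2 a" using N unfolding n_def a_def b_def .
    have h3: "b \<le> q + a" using c1 unfolding q_def a_def b_def .
    have h4: "q \<ge> 1" using c2[OF False] unfolding q_def .
    have h5: "a = b \<Longrightarrow> r \<ge> 1" using c3[OF False] unfolding r_def a_def b_def .
    have h6: "l = r + q" using cL unfolding l_def r_def q_def .
    have h7: "a \<le> b" using assms(4) unfolding a_def b_def .
    have "p + n \<le> l" using h1 h2 h3 h4 h5 h6 h7 by (simp split: if_split_asm)
    then show ?thesis unfolding p_def n_def l_def .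
  qed
qed


lemma comb_sym:
  assumes "finite S" "A \<subseteq> S" "B \<subseteq> S"
  shows "card {u\<in>S. (A={u}) \<noteq> (B={u})} + card {j\<in>{3..card S}. (card A < j) \<noteq> (card B < j)}
         \<le> card {u\<in>S. (u\<in>A) \<noteq> (u\<in>B)}"
proof (cases "card A \<le> card B")
  case True then show ?thesis using comb[OF assms] by simp
next
  case False
  have "card {u\<in>S. (B={u}) \<noteq> (A={u})} + card {j\<in>{3..card S}. (card B < j) \<noteq> (card A < j)}
         \<le> card {u\<in>S. (u\<in>B) \<noteq> (u\<in>A)}" using comb[OF assms(1) assms(3) assms(2)] False by simp
  moreover have "{u\<in>S. (B={u}) \<noteq> (A={u})} = {u\<in>S. (A={u}) \<noteq> (B={u})}" by auto
  moreover have "{j\<in>{3..card S}. (card B < j) \<noteq> (card A < j)} = {j\<in>{3..card S}. (card A < j) \<noteq> (card B < j)}" by auto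
  moreover have "{u\<in>S. (u\<in>B) \<noteq> (u\<in>A)} = {u\<in>S. (u\<in>A) \<noteq> (u\<in>B)}" by auto
  ultimately show ?thesis by simp
qed

lemma cut_pos:
  assumes "connected_graph V E" "\<forall>e\<in>E. c e > 0" "is_cut V W"
  shows "cut_cost E c W > 0"
proof -
  have gr: "graph V E" using assms(1) unfolding connected_graph_def by simp
  then have finV: "finite V" and Esub: "\<forall>e\<in>E. e \<subseteq> V" unfolding graph_def by auto
  have "E \<subseteq> Pow V" using Esub by auto
  then have finE: "finite E" using finV finite_subset by blast
  obtain w where w: "w \<in> W" using assms(3) unfolding is_cut_def by auto
  obtain v where v: "v \<in> V" "v \<notin> W" using assms(3) unfolding is_cut_def by auto
  have wV: "w \<in> V" using w assms(3) unfolding is_cut_def by auto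
  have path: "(w, v) \<in> (adj_rel E)\<^sup>*" using assms(1) wV v unfolding connected_graph_def by auto
  have "\<And>z. (w, z) \<in> (adj_rel E)\<^sup>* \<Longrightarrow> z \<in> W \<or> (\<exists>e\<in>E. card (e \<inter> W) = 1)"
  proof -
    fix z assume "(w, z) \<in> (adj_rel E)\<^sup>*"
    then show "z \<in> W \<or> (\<exists>e\<in>E. card (e \<inter> W) = 1)"
    proof (induction rule: rtrancl_induct)
      case base then show ?case using w by simp
    next
      case (step y z)
      have yz: "{y, z} \<in> E" using step(2) unfolding adj_rel_def by simp
      show ?case
      proof (cases "z \<in> W")
        case True then show ?thesis by simp
      next
        case False
        show ?thesis
        proof (cases "y \<in> W")
          case True
          then have "{y, z} \<inter> W = {y}" using False by auto
          then have "card ({y, z} \<inter> W) = 1" by simp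
          then show ?thesis using yz by blast
        next
          case False then show ?thesis using step(3) by simp
        qed
      qed
    qed
  qed
  then obtain e where e: "e \<in> E" "card (e \<inter> W) = 1" using path v by blast
  have "c e \<le> cut_cost E c W" unfolding cut_cost_def
    using e finE assms(2) by (intro member_le_sum) auto
  moreover have "c e > 0" using e assms(2) by simp
  ultimately show ?thesis by linarith
qed

theorem theorem2p1:
  fixes V :: "'a set" and E :: "'a set set" and c :: "'a set \<Rightarrow> real"
    and \<alpha> :: real and U :: "'a set"
  assumes "connected_graph V E"
    and "\<forall>e\<in>E. c e > 0"
    and "\<alpha> \<ge> 1"
    and "approx_min_cut V E c \<alpha> U"
  shows "\<exists>S. S \<subseteq> U \<and> real (card S) \<le> of_int \<lfloor>2 * \<alpha>\<rfloor> + 1 \<and>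
             unique_min_terminal_cut V E c S (V - U) U"
proof -
  define T where "T = V - U"
  define d where "d = cut_cost E c"
  define D where "D = d U"
  define lam where "lam = min_cut_value V E c"
  have gr: "graph V E" using assms(1) unfolding connected_graph_def by simp
  then have finV: "finite V" and Esub: "\<forall>e\<in>E. e \<subseteq> V \<and> card e = 2" unfolding graph_def by auto
  have "E \<subseteq> Pow V" using Esub by auto
  then have finE: "finite E" using finV finite_subset by blast
  have cutU: "is_cut V U" using assms(4) unfolding approx_min_cut_def by simp
  have DU: "D \<le> \<alpha> * lam" using assms(4) unfolding approx_min_cut_def D_def d_def lam_def by simp
  have cuts_fin: "finite {W. is_cut V W}"
    by (rule finite_subset[of _ "Pow V"]) (auto simp: is_cut_def finV)
  have lam_le: "\<And>W. is_cut V W \<Longrightarrow> lam \<le> d W"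
    unfolding lam_def min_cut_value_def d_def using cuts_fin by (intro Min_le) auto
  have "lam \<in> d ` {W. is_cut V W}"
    unfolding lam_def min_cut_value_def d_def using cuts_fin cutU by (intro Min_in) auto
  then obtain W0 where "is_cut V W0" "lam = d W0" by auto
  then have lam_pos: "lam > 0" using cut_pos[OF assms(1) assms(2)] unfolding d_def by simp
  have UV: "U \<subset> V" "U \<noteq> {}" using cutU unfolding is_cut_def by auto
  define works where "works S \<longleftrightarrow> unique_min_terminal_cut V E c S T U" for S
  have works_U: "works U"
    unfolding works_def unique_min_terminal_cut_def terminal_cut_def T_def using UV cutU by auto
  obtain S where S: "S \<subseteq> U \<and> works S" and Smin: "\<And>S'. S' \<subseteq> U \<and> works S' \<Longrightarrow> card S \<le> card S'"
    using ex_has_least_nat[of "\<lambda>S. S \<subseteq> U \<and> works S" U card] works_U by blast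
  have SU: "S \<subseteq> U" and wS: "works S" using S by auto
  have finU: "finite U" using UV finV finite_subset by auto
  have finS: "finite S" using SU finU finite_subset by auto
  have tcS: "terminal_cut V S T U" and uniqS: "\<And>Y. terminal_cut V S T Y \<Longrightarrow> Y \<noteq> U \<Longrightarrow> D < d Y"
    using wS unfolding works_def unique_min_terminal_cut_def D_def d_def by auto
  have Sne: "S \<noteq> {}" using tcS unfolding terminal_cut_def by simp
  define k where "k = card S"
  have "real k \<le> of_int \<lfloor>2 * \<alpha>\<rfloor> + 1"
  proof (cases "k \<le> 1")
    case True
    have "2 \<le> \<lfloor>2 * \<alpha>\<rfloor>" using assms(3) by (simp add: le_floor_iff)
    then have "(2::real) \<le> of_int \<lfloor>2 * \<alpha>\<rfloor>" by linarith
    moreover have "real k \<le> 1" using True by simp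
    ultimately show ?thesis by linarith
  next
    case False
    then have k2: "k \<ge> 2" by simp
    have Yex: "\<forall>u\<in>S. \<exists>Y. S - {u} \<subseteq> Y \<and> Y \<subseteq> U \<and> u \<notin> Y \<and> d Y \<le> D"
    proof
      fix u assume uS: "u \<in> S"
      have "card (S - {u}) < card S" by (rule card_Diff1_less[OF finS uS])
      then have nw: "\<not> works (S - {u})" using Smin[of "S - {u}"] SU by auto
      have ne: "S - {u} \<noteq> {}"
      proof
        assume "S - {u} = {}"
        then have "S \<subseteq> {u}" by auto
        then have "card S \<le> card {u}" by (intro card_mono) simp_all
        then have "card S \<le> 1" by simp
        then show False using k2 unfolding k_def by simp
      qed
      have tc': "terminal_cut V (S - {u}) T U" using tcS ne unfolding terminal_cut_def by auto
      then obtain Y where Y: "terminal_cut V (S - {u}) T Y" "Y \<noteq> U" "\<not> d U < d Y"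
        using nw unfolding works_def unique_min_terminal_cut_def d_def by auto
      have YU: "Y \<subseteq> U" using Y(1) unfolding terminal_cut_def T_def by auto
      have uY: "u \<notin> Y"
      proof
        assume "u \<in> Y"
        then have "terminal_cut V S T Y" using Y(1) tcS unfolding terminal_cut_def by auto
        then have "D < d Y" using uniqS Y(2) by simp
        then show False using Y(3) unfolding D_def by simp
      qed
      show "\<exists>Y. S - {u} \<subseteq> Y \<and> Y \<subseteq> U \<and> u \<notin> Y \<and> d Y \<le> D"
        using Y YU uY unfolding terminal_cut_def D_def by (intro exI[of _ Y]) auto
    qed
    then obtain Y where Y: "\<forall>u\<in>S. S - {u} \<subseteq> Y u \<and> Y u \<subseteq> U \<and> u \<notin> Y u \<and> d (Y u) \<le> D"
      using bchoice[OF Yex] by blast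
    define A where "A x = {u\<in>S. x \<notin> Y u}" for x
    have AsubS: "A x \<subseteq> S" for x unfolding A_def by auto
    have AS: "A u = {u}" if "u \<in> S" for u
      using Y that unfolding A_def by auto
    have AT: "A x = S" if "x \<notin> U" for x
      using Y that unfolding A_def by auto
    define P where "P u = {x\<in>V. A x = {u}}" for u
    define N where "N j = {x\<in>V. card (A x) < j}" for j
    have P_cut: "is_cut V (P u)" if "u \<in> S" for u
    proof -
      have "u \<in> P u" using that AS SU UV unfolding P_def by auto
      moreover have "P u \<subseteq> U"
      proof
        fix x assume "x \<in> P u"
        show "x \<in> U"
        proof (rule ccontr)
          assume "x \<notin> U"
          then have "S = {u}" using AT \<open>x \<in> P u\<close> unfolding P_def by auto
          then show False using k2 unfolding k_def by simp
        qed
      qed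
      ultimately show ?thesis using UV unfolding is_cut_def by auto
    qed
    have N_ge: "D \<le> d (N j)" if "j \<in> {3..k}" for j
    proof -
      have "S \<subseteq> N j" using AS that SU UV unfolding N_def by auto
      moreover have "N j \<subseteq> U"
      proof
        fix x assume x: "x \<in> N j"
        show "x \<in> U"
        proof (rule ccontr)
          assume "x \<notin> U"
          then have "card (A x) = k" using AT unfolding k_def by simp
          then show False using x that unfolding N_def by simp
        qed
      qed
      ultimately have "terminal_cut V S T (N j)"
        using tcS Sne UV unfolding terminal_cut_def is_cut_def T_def by auto
      then show ?thesis
      proof (cases "N j = U")
        case True then show ?thesis unfolding D_def by simp
      next
        case False then show ?thesis using uniqS[of "N j"] \<open>terminal_cut V S T (N j)\<close> by simp
      qed
    qed
    have edge: "real (card {u\<in>S. card (e \<inter> P u) = 1}) + real (card {j\<in>{3..k}. card (e \<inter> N j) = 1})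
               \<le> real (card {u\<in>S. card (e \<inter> Y u) = 1})" if "e \<in> E" for e
    proof -
      have "e \<subseteq> V" "card e = 2" using Esub that by auto
      obtain x y where xy0: "e = {x, y}" "x \<noteq> y" using \<open>card e = 2\<close> by (auto simp: card_2_iff)
      have xy: "x \<noteq> y" "e = {x, y}" "x \<in> V" "y \<in> V" using xy0 \<open>e \<subseteq> V\<close> by auto
      have cr: "\<And>Z. card (e \<inter> Z) = 1 \<longleftrightarrow> (x \<in> Z) \<noteq> (y \<in> Z)"
        using card_inter_two[OF xy(1)] xy(2) by simp
      have e1: "{u\<in>S. card (e \<inter> P u) = 1} = {u\<in>S. (A x = {u}) \<noteq> (A y = {u})}"
        unfolding cr P_def using xy(3,4) by simp
      have e2: "{j\<in>{3..k}. card (e \<inter> N j) = 1} = {j\<in>{3..card S}. (card (A x) < j) \<noteq> (card (A y) < j)}"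
        unfolding cr N_def k_def using xy(3,4) by simp
      have e3: "{u\<in>S. card (e \<inter> Y u) = 1} = {u\<in>S. (u \<in> A x) \<noteq> (u \<in> A y)}"
        unfolding cr A_def by auto
      show ?thesis unfolding e1 e2 e3
        using comb_sym[OF finS AsubS AsubS, of x y] by linarith
    qed
    have sum1: "(\<Sum>u\<in>S. d (P u)) + (\<Sum>j\<in>{3..k}. d (N j)) \<le> (\<Sum>u\<in>S. d (Y u))"
    proof -
      have "(\<Sum>u\<in>S. d (P u)) + (\<Sum>j\<in>{3..k}. d (N j))
          = (\<Sum>e\<in>E. c e * real (card {u\<in>S. card (e \<inter> P u) = 1}))
            + (\<Sum>e\<in>E. c e * real (card {j\<in>{3..k}. card (e \<inter> N j) = 1}))"
        unfolding d_def using cut_cost_sum[OF finE finS] cut_cost_sum[OF finE, of "{3..k}"] by simp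
      also have "\<dots> = (\<Sum>e\<in>E. c e * (real (card {u\<in>S. card (e \<inter> P u) = 1})
            + real (card {j\<in>{3..k}. card (e \<inter> N j) = 1})))"
        by (simp add: sum.distrib distrib_left)
      also have "\<dots> \<le> (\<Sum>e\<in>E. c e * real (card {u\<in>S. card (e \<inter> Y u) = 1}))"
        using edge assms(2) by (intro sum_mono mult_left_mono) (auto simp: less_imp_le)
      also have "\<dots> = (\<Sum>u\<in>S. d (Y u))"
        unfolding d_def using cut_cost_sum[OF finE finS] by simp
      finally show ?thesis .
    qed
    have sY: "(\<Sum>u\<in>S. d (Y u)) \<le> real k * D"
    proof -
      have "(\<Sum>u\<in>S. d (Y u)) \<le> (\<Sum>u\<in>S. D)" using Y by (intro sum_mono) auto
      then show ?thesis unfolding k_def by simp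
    qed
    have sP: "real k * lam \<le> (\<Sum>u\<in>S. d (P u))"
    proof -
      have "(\<Sum>u\<in>S. lam) \<le> (\<Sum>u\<in>S. d (P u))" using lam_le P_cut by (intro sum_mono) auto
      then show ?thesis unfolding k_def by simp
    qed
    have sN: "(real k - 2) * D \<le> (\<Sum>j\<in>{3..k}. d (N j))"
    proof -
      have "(\<Sum>j\<in>{3..k}. D) \<le> (\<Sum>j\<in>{3..k}. d (N j))" using N_ge by (intro sum_mono) auto
      moreover have "real (k - 2) = real k - 2" using k2 by (simp add: of_nat_diff)
      moreover have "(\<Sum>j\<in>{3..k}. D) = real (k - 2) * D" by simp
      ultimately show ?thesis by simp
    qed
    have "real k * lam \<le> 2 * D" using sum1 sY sP sN by (simp add: algebra_simps)
    also have "\<dots> \<le> 2 * \<alpha> * lam" using DU by simp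
    finally have "real k * lam \<le> (2 * \<alpha>) * lam" by simp
    then have "real k \<le> 2 * \<alpha>" using lam_pos by simp
    then have "int k \<le> \<lfloor>2 * \<alpha>\<rfloor>" by (simp add: le_floor_iff)
    then show ?thesis by linarith
  qed
  then show ?thesis using SU wS unfolding works_def T_def k_def by blast
qed

end
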